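(* Let $a=\{a_k\}_{k=0}^\infty$ be a real sequence with $1=a_0>a_1\geq a_2\geq\cdots\geq a_{k-1}\geq a_k\geq\cdots$, $\lim_{k\to\infty}a_k=0$, and $\sum_{k=0}^\infty a_k=\infty$. Define $\{b_k\}_{k=0}^\infty$ by $b_0=1/a_0$ and $b_k=-\frac{1}{a_0}\sum_{j=0}^{k-1}a_{k-j}b_j$ for $k\geq1$. Then $\lim_{k\to\infty}b_k=0$.
   Context: The sequence $\{b_k\}$ gives the entries of the inverse $B=A^{-1}$ of the half-infinite lower triangular Toeplitz matrix $A$ with entries $A_{ij}=a_{i-j}$ for $i\geq j$ (and $0$ otherwise). *)

theory Defs
  imports "HOL-Analysis.Analysis"
begin

text \<open>The sequence b: b_0 = 1/a_0, b_k = -(1/a_0) * sum_{j<k} a_(k-j) b_j for k >= 1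
  (entries of the inverse of the lower triangular Toeplitz matrix with entries a_(i-j)).\<close>
function inv_toeplitz_seq :: "(nat \<Rightarrow> real) \<Rightarrow> nat \<Rightarrow> real" where
  "inv_toeplitz_seq a k =
     (if k = 0 then 1 / a 0
      else - (1 / a 0) * (\<Sum>j<k. a (k - j) * inv_toeplitz_seq a j))"
  by auto
termination
  by (relation "Wellfounded.measure snd") auto

declare inv_toeplitz_seq.simps [simp del]

end

theory Submission imports Defs "HOL-Computational_Algebra.Formal_Power_Series" begin

lemma tele: "p \<le> q \<Longrightarrow> (\<Sum>i=p..<q. (a i - a (Suc i)::real)) = a p - a q"
  by (induction q) (auto simp: le_Suc_eq)

lemma step_bound:
  fixes a u :: "nat \<Rightarrow> real"
  assumes a0: "a 0 = 1" and anonneg: "\<And>i. 0 \<le> a i" and dnonneg: "\<And>i. a (Suc i) \<le> a i"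
    and alim: "a \<longlonglongrightarrow> 0"
    and unonneg: "\<And>n. 0 \<le> u n" and ule1: "\<And>n. u n \<le> 1"
    and rec: "\<And>m. u (Suc m) = (\<Sum>i\<le>m. (a i - a (Suc i)) * u (m - i))"
    and e: "e > 0" and L: "L \<ge> 0" and ev: "eventually (\<lambda>n. u n \<le> L + e) sequentially"
  shows "eventually (\<lambda>m. u (Suc m) \<le> (1 - a 1) * u m + a 1 * (L + e) + e) sequentially"
proof -
  obtain N where N: "\<And>n. n \<ge> N \<Longrightarrow> u n \<le> L + e" using ev by (auto simp: eventually_sequentially)
  have "eventually (\<lambda>n. a n < e) sequentially" using order_tendstoD(2)[OF alim e] .
  then obtain M where M: "\<And>n. n \<ge> M \<Longrightarrow> a n < e" by (auto simp: eventually_sequentially)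
  define d where "d i = a i - a (Suc i)" for i
  have d0: "\<And>i. d i \<ge> 0" using dnonneg by (simp add: d_def)
  show ?thesis unfolding eventually_sequentially
  proof (intro exI allI impI)
    fix m assume m: "m \<ge> N + M"
    have split: "u (Suc m) = d 0 * u m + (\<Sum>i=1..m. d i * u (m - i))"
      using rec[of m] unfolding d_def[symmetric]
      by (simp add: atMost_atLeast0 sum.atLeast_Suc_atMost)
    have pw: "d i * u (m - i) \<le> d i * (L + e) + (if m - N < i then d i else 0)" if "i \<in> {1..m}" for i
    proof (cases "m - N < i")
      case True
      have "d i * u (m - i) \<le> d i * 1" using d0 ule1 by (intro mult_left_mono) auto
      moreover have "d i * (L + e) \<ge> 0" using d0 L e by simp
      ultimately show ?thesis using True by simp
    next
      case False
      then have "m - i \<ge> N" using m by auto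
      then have "d i * u (m - i) \<le> d i * (L + e)" using d0 N by (intro mult_left_mono) auto
      then show ?thesis using False by simp
    qed
    have "(\<Sum>i=1..m. d i * u (m - i)) \<le> (\<Sum>i=1..m. d i * (L + e) + (if m - N < i then d i else 0))"
      by (rule sum_mono) (rule pw)
    also have "\<dots> = (\<Sum>i=1..m. d i) * (L + e) + (\<Sum>i=1..m. (if m - N < i then d i else 0))"
      by (simp add: sum.distrib sum_distrib_right)
    also have "(\<Sum>i=1..m. d i) = a 1 - a (Suc m)"
      using tele[of 1 "Suc m" a] by (simp add: d_def atLeastLessThanSuc_atLeastAtMost)
    also have "(\<Sum>i=1..m. (if m - N < i then d i else 0)) = (\<Sum>i=Suc (m - N)..<Suc m. d i)"
    proof -
      have "(\<Sum>i=1..m. (if m - N < i then d i else 0)) = sum d ({1..m} \<inter> {i. m - N < i})"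
        by (simp add: sum.If_cases)
      also have "{1..m} \<inter> {i. m - N < i} = {Suc (m - N)..<Suc m}" using m by auto
      finally show ?thesis .
    qed
    also have "\<dots> = a (Suc (m - N)) - a (Suc m)"
      using tele[of "Suc (m - N)" "Suc m" a] by (simp add: d_def)
    finally have "(\<Sum>i=1..m. d i * u (m - i)) \<le> (a 1 - a (Suc m)) * (L + e) + (a (Suc (m - N)) - a (Suc m))" .
    moreover have "(a 1 - a (Suc m)) * (L + e) \<le> a 1 * (L + e)"
      using anonneg[of "Suc m"] L e by (intro mult_right_mono) auto
    moreover have "a (Suc (m - N)) < e" using M m by auto
    moreover have "d 0 = 1 - a 1" using a0 by (simp add: d_def)
    moreover have "u (Suc m) = (1 - a 1) * u m + (\<Sum>i=1..m. d i * u (m - i))"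
      using split a0 by (simp add: d_def)
    ultimately show "u (Suc m) \<le> (1 - a 1) * u m + a 1 * (L + e) + e"
      using anonneg[of "Suc m"] by linarith
  qed
qed

lemma renewal:
  fixes a u :: "nat \<Rightarrow> real"
  assumes a0: "a 0 = 1" and anonneg: "\<And>i. 0 \<le> a i" and dnonneg: "\<And>i. a (Suc i) \<le> a i"
    and a1: "a 1 < 1"
    and alim: "a \<longlonglongrightarrow> 0" and div: "\<not> summable a"
    and unonneg: "\<And>n. 0 \<le> u n" and ule1: "\<And>n. u n \<le> 1"
    and rec: "\<And>m. u (Suc m) = (\<Sum>i\<le>m. (a i - a (Suc i)) * u (m - i))"
    and ident: "\<And>n. (\<Sum>i\<le>n. a i * u (n - i)) = 1"
  shows "u \<longlonglongrightarrow> 0"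
proof -
  define S where "S = {s. eventually (\<lambda>n. u n \<le> s) sequentially}"
  define L where "L = Inf S"
  have S1: "1 \<in> S" using ule1 by (simp add: S_def)
  have Sge: "s \<ge> 0" if "s \<in> S" for s
  proof -
    from that obtain N where "\<And>n. n \<ge> N \<Longrightarrow> u n \<le> s" by (auto simp: S_def eventually_sequentially)
    then show ?thesis using unonneg[of N] by force
  qed
  have bdd: "bdd_below S" using Sge by (auto simp: bdd_below_def)
  have Sne: "S \<noteq> {}" using S1 by auto
  have L0: "L \<ge> 0" unfolding L_def using Sne Sge by (intro cInf_greatest) auto
  have P1: "eventually (\<lambda>n. u n \<le> L + e) sequentially" if "e > 0" for e
  proof -
    have "Inf S < L + e" using that by (simp add: L_def)
    then obtain s where "s \<in> S" "s < L + e" using cInf_less_iff[OF Sne bdd] by auto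
    then show ?thesis unfolding S_def by (auto elim: eventually_mono)
  qed
  have P2: "frequently (\<lambda>n. L - e < u n) sequentially" if "e > 0" for e
  proof (rule ccontr)
    assume "\<not> ?thesis"
    then have "eventually (\<lambda>n. u n \<le> L - e) sequentially"
      by (simp add: not_frequently not_less)
    then have "L - e \<in> S" by (simp add: S_def)
    then have "L \<le> L - e" unfolding L_def using bdd by (rule cInf_lower)
    then show False using that by simp
  qed
  define c where "c = 1 - a 1"
  have cpos: "c > 0" and cle: "c \<le> 1" using a1 anonneg[of 1] by (auto simp: c_def)
  have claim: "\<forall>e>0. frequently (\<lambda>n. k \<le> n \<and> (\<forall>i\<le>k. L - e \<le> u (n - i))) sequentially" for k
  proof (induction k)
    case 0
    show ?case
    proof (intro allI impI)
      fix e :: real assume "e > 0"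
      from P2[OF this] show "frequently (\<lambda>n. 0 \<le> n \<and> (\<forall>i\<le>0. L - e \<le> u (n - i))) sequentially"
        by (auto elim: frequently_elim1)
    qed
  next
    case (Suc k)
    show ?case
    proof (intro allI impI)
      fix e :: real assume e: "e > 0"
      define f where "f = c * e / 3"
      have f: "f > 0" "f \<le> e" using cpos cle e by (auto simp: f_def)
      have fr: "frequently (\<lambda>n. k \<le> n \<and> (\<forall>i\<le>k. L - f \<le> u (n - i))) sequentially"
        using Suc f by auto
      have evb: "eventually (\<lambda>m. u (Suc m) \<le> c * u m + a 1 * (L + f) + f) sequentially"
        unfolding c_def
        by (rule step_bound[OF a0 anonneg dnonneg alim unonneg ule1 rec f(1) L0 P1[OF f(1)]])
      then obtain M where M: "\<And>m. m \<ge> M \<Longrightarrow> u (Suc m) \<le> c * u m + a 1 * (L + f) + f"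
        by (auto simp: eventually_sequentially)
      have ev2: "eventually (\<lambda>n. n \<ge> Suc k + M) sequentially" by (rule eventually_ge_at_top)
      from frequently_eventually_conj[OF fr ev2]
      show "frequently (\<lambda>n. Suc k \<le> n \<and> (\<forall>i\<le>Suc k. L - e \<le> u (n - i))) sequentially"
      proof (rule frequently_elim1)
        fix n assume H: "Suc k + M \<le> n \<and> k \<le> n \<and> (\<forall>i\<le>k. L - f \<le> u (n - i))"
        define m where "m = n - Suc k"
        have mM: "m \<ge> M" and nk: "Suc m = n - k" using H by (auto simp: m_def)
        have "u (n - k) \<le> c * u m + a 1 * (L + f) + f" using M[OF mM] nk by simp
        moreover have "L - f \<le> u (n - k)" using H by auto
        moreover have "a 1 = 1 - c" by (simp add: c_def)
        ultimately have "L - f \<le> c * u m + (1 - c) * (L + f) + f" by simp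
        then have "L - f \<le> c * u m + L + f - c * L - c * f + f" by (simp add: algebra_simps)
        moreover have "c * f \<ge> 0" using cpos f by simp
        moreover have "3 * f = c * e" by (simp add: f_def)
        ultimately have "c * (L - e) \<le> c * u m" by (simp add: algebra_simps)
        then have um: "L - e \<le> u m" using cpos by simp
        have "\<forall>i\<le>Suc k. L - e \<le> u (n - i)"
        proof (intro allI impI)
          fix i assume "i \<le> Suc k"
          then consider "i \<le> k" | "i = Suc k" by linarith
          then show "L - e \<le> u (n - i)"
          proof cases
            case 1 then show ?thesis using H f by force
          next
            case 2 then show ?thesis using um by (simp add: m_def)
          qed
        qed
        then show "Suc k \<le> n \<and> (\<forall>i\<le>Suc k. L - e \<le> u (n - i))" using H by simp
      qed
    qed
  qed
  have L00: "L = 0"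
  proof (rule ccontr)
    assume "L \<noteq> 0"
    then have Lp: "L > 0" using L0 by simp
    obtain K where K: "(\<Sum>i<K. a i) > 2 / L"
    proof (rule ccontr)
      assume "\<not> thesis"
      then have "\<And>K. (\<Sum>i<K. a i) \<le> 2 / L" using that by (meson not_le)
      then have "summable a" by (rule summableI_nonneg_bounded[OF anonneg])
      then show False using div by simp
    qed
    have "L/2 > 0" using Lp by simp
    then have "frequently (\<lambda>n. K \<le> n \<and> (\<forall>i\<le>K. L - L/2 \<le> u (n - i))) sequentially"
      using claim[of K] by blast
    then obtain n where n: "K \<le> n" "\<And>i. i \<le> K \<Longrightarrow> L - L/2 \<le> u (n - i)"
      by (auto dest!: frequently_ex)
    have n2: "\<And>i. i \<le> K \<Longrightarrow> L/2 \<le> u (n - i)" using n(2) by (metis field_sum_of_halves add_diff_cancel_left')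
    have "(\<Sum>i<K. a i) * (L/2) = (\<Sum>i<K. a i * (L/2))" by (simp add: sum_distrib_right)
    also have "\<dots> \<le> (\<Sum>i<K. a i * u (n - i))"
      using n2 anonneg by (intro sum_mono mult_left_mono) auto
    also have "\<dots> \<le> (\<Sum>i\<le>n. a i * u (n - i))"
      using n anonneg unonneg by (intro sum_mono2) auto
    also have "\<dots> = 1" by (rule ident)
    finally have "(\<Sum>i<K. a i) * (L/2) \<le> 1" .
    moreover have "(\<Sum>i<K. a i) * (L/2) > 2 / L * (L/2)"
      using K Lp by (intro mult_strict_right_mono) auto
    ultimately show False using Lp by simp
  qed
  show ?thesis
  proof (rule order_tendstoI)
    fix y :: real assume "y < 0"
    then show "eventually (\<lambda>n. y < u n) sequentially" using unonneg
      by (auto intro: always_eventually less_le_trans)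
  next
    fix y :: real assume y: "y > 0"
    have "eventually (\<lambda>n. u n \<le> L + y/2) sequentially" using P1 y by simp
    then show "eventually (\<lambda>n. u n < y) sequentially" using L00 y
      by (auto elim: eventually_mono)
  qed
qed

theorem corollary1:
  fixes a :: "nat \<Rightarrow> real"
  assumes a0: "a 0 = 1"
    and a01: "a 0 > a 1"
    and mono: "\<And>k. k \<ge> 1 \<Longrightarrow> a k \<ge> a (Suc k)"
    and lim: "a \<longlonglongrightarrow> 0"
    and div: "\<not> summable a"
  shows "inv_toeplitz_seq a \<longlonglongrightarrow> 0"
proof -
  define b where "b = inv_toeplitz_seq a"
  define u where "u n = (\<Sum>i\<le>n. b i)" for n
  have dnonneg: "a (Suc i) \<le> a i" for i
    using a01 mono[of i] by (cases i) auto
  have decr: "a (k + j) \<le> a k" for k j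
    by (induction j) (auto intro: order_trans[OF dnonneg])
  have anonneg: "0 \<le> a k" for k
    using lim by (rule LIMSEQ_le_const2) (use decr in \<open>auto intro!: exI[of _ k] dest!: le_Suc_ex\<close>)
  have brec: "(\<Sum>j\<le>k. a (k - j) * b j) = (if k = 0 then 1 else 0)" for k
  proof (cases "k = 0")
    case True then show ?thesis by (simp add: b_def inv_toeplitz_seq.simps a0)
  next
    case False
    have "b k = - (1 / a 0) * (\<Sum>j<k. a (k - j) * b j)"
      unfolding b_def by (subst inv_toeplitz_seq.simps) (simp add: False)
    then have "b k = - (\<Sum>j<k. a (k - j) * b j)" using a0 by simp
    moreover have "(\<Sum>j\<le>k. a (k - j) * b j) = (\<Sum>j<k. a (k - j) * b j) + a 0 * b k"
      by (simp add: lessThan_Suc_atMost[symmetric])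
    ultimately show ?thesis using False a0 by simp
  qed
  have BA: "Abs_fps b * Abs_fps a = 1"
  proof (rule fps_ext)
    fix n
    have "fps_nth (Abs_fps b * Abs_fps a) n = (\<Sum>i=0..n. b i * a (n - i))" by (simp add: fps_mult_nth)
    also have "\<dots> = (\<Sum>j\<le>n. a (n - j) * b j)" by (simp add: atMost_atLeast0 mult.commute)
    also have "\<dots> = fps_nth 1 n" using brec[of n] by simp
    finally show "fps_nth (Abs_fps b * Abs_fps a) n = fps_nth 1 n" .
  qed
  define Ones where "Ones = (Abs_fps (\<lambda>_. 1) :: real fps)"
  have Un: "fps_nth (Abs_fps b * Ones) n = u n" for n
    by (simp add: fps_mult_nth Ones_def u_def atMost_atLeast0)
  have ident: "(\<Sum>i\<le>n. a i * u (n - i)) = 1" for n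
  proof -
    have "Abs_fps a * (Abs_fps b * Ones) = Ones"
      by (metis BA mult.assoc mult.commute mult_1)
    then have "fps_nth (Abs_fps a * (Abs_fps b * Ones)) n = fps_nth Ones n" by (simp only:)
    then have "fps_nth (Abs_fps a * (Abs_fps b * Ones)) n = 1" by (simp add: Ones_def)
    then show ?thesis by (simp only: fps_mult_nth[of "Abs_fps a" "Abs_fps b * Ones"] Un atMost_atLeast0 fps_nth_Abs_fps)
  qed
  have rec: "u (Suc m) = (\<Sum>i\<le>m. (a i - a (Suc i)) * u (m - i))" for m
  proof -
    have "1 = (\<Sum>i\<le>Suc m. a i * u (Suc m - i))" using ident[of "Suc m"] by (simp only:)
    also have "\<dots> = a 0 * u (Suc m) + (\<Sum>i\<le>m. a (Suc i) * u (m - i))"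
      by (simp only: sum.atMost_Suc_shift diff_Suc_Suc diff_zero)
    finally have "u (Suc m) = (\<Sum>i\<le>m. a i * u (m - i)) - (\<Sum>i\<le>m. a (Suc i) * u (m - i))"
      using ident[of m] a0 by simp
    then show ?thesis by (simp add: sum_subtractf left_diff_distrib)
  qed
  have unonneg: "0 \<le> u n" for n
  proof (induction n rule: less_induct)
    case (less n)
    show ?case
    proof (cases n)
      case 0 then show ?thesis by (simp add: u_def b_def inv_toeplitz_seq.simps a0)
    next
      case (Suc m)
      then show ?thesis using rec[of m] less dnonneg
        by (auto intro!: sum_nonneg mult_nonneg_nonneg)
    qed
  qed
  have ule1: "u n \<le> 1" for n
  proof -
    have "a 0 * u (n - 0) \<le> (\<Sum>i\<le>n. a i * u (n - i))"
      by (rule member_le_sum) (use anonneg unonneg in auto)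
    then show ?thesis using ident[of n] a0 by simp
  qed
  have ulim: "u \<longlonglongrightarrow> 0"
    by (rule renewal[OF a0 anonneg dnonneg _ lim div unonneg ule1 rec ident]) (use a01 a0 in simp)
  have "(\<lambda>n. u (Suc n) - u n) \<longlonglongrightarrow> 0 - 0"
    by (intro tendsto_diff ulim) (rule LIMSEQ_Suc[OF ulim])
  moreover have "u (Suc n) - u n = b (Suc n)" for n by (simp add: u_def)
  ultimately have "(\<lambda>n. b (Suc n)) \<longlonglongrightarrow> 0" by simp
  then show ?thesis unfolding b_def by (rule LIMSEQ_imp_Suc)
qed

end
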